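(* Let $n,b$ be integers with $1<n<b$, let $C$ be an $(n,b)$-permutiple class, and let $G_C$ be its graph. The following statements are equivalent: (1) $\overline{G}_C$ is the graph of a permutiple class, i.e. there is an $(n,b)$-permutiple $q$ with $G_q=\overline{G}_C$; (2) the state $0$ is a vertex of $\overline{\Gamma}_C$; (3) the state $n-1$ is a vertex of $\Gamma_C$.
   Context: For digits $0\le d_j<b$, $(d_k,\ldots,d_0)_b$ denotes $\sum_{j=0}^k d_jb^j$ (leading zero digits allowed). For a permutation $\sigma$ of $\{0,\ldots,k\}$, $(d_k,\ldots,d_0)_b$ is an $(n,b,\sigma)$-permutiple if $(d_k,\ldots,d_0)_b=n\cdot(d_{\sigma(k)},\ldots,d_{\sigma(0)})_b$, and an $(n,b)$-permutiple if this holds for some $\sigma$. The graph $G_p$ of such a $p$ is the directed graph with vertex set $\{0,\ldots,b-1\}$ and edge set $\{(d_j,d_{\sigma(j)})\mid 0\le j\le k\}$. The class of an $(n,b)$-permutiple $p$ is the set $C$ of all $(n,b)$-permutiples $q$ with $G_q$ a subgraph of $G_p$; its graph is $G_C=G_p$. For a digit $d$ put $\overline d=b-1-d$, for a state $c\in\{0,\ldots,n-1\}$ put $\overline c=n-1-c$. The reflection $\overline{G}$ of a directed graph $G$ on $\{0,\ldots,b-1\}$ has the same vertices and edges $(\overline{d}_1,\overline{d}_2)$ for edges $(d_1,d_2)$ of $G$. Let $\lambda(x)$ be the least non-negative residue of $x$ mod $b$; the mother graph $M$ is the directed graph on $\{0,\ldots,b-1\}$ with edges the pairs $(d_1,d_2)$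 with $\lambda(d_1+(b-n)d_2)\le n-1$. The Hoey-Sloane graph $\Gamma$ is the edge-labelled directed graph on states $\{0,\ldots,n-1\}$ in which $(c_1,c_2)$ is an edge labelled by every edge $(d_1,d_2)$ of $M$ with $n d_2-d_1+c_1=bc_2$ (an edge exists iff there is at least one such label). The cycle image of a directed cycle $C_0$ of $M$ is the edge-labelled subgraph of $\Gamma$ with edges the $(c_1,c_2)$ for which $\{(d_1,d_2)\in C_0\mid n d_2-d_1+c_1=bc_2\}$ is nonempty, labelled by this set, and vertices the endpoints of these edges. $\Gamma_C$ is the union (of vertices, edges and labels) of the cycle images of the directed cycles of $M$ contained in $G_C$. The reflection $\overline{\Gamma}_C$ has vertices $\overline{c}$, edges $(\overline{c}_1,\overline{c}_2)$ and labels $(\overline{d}_1,\overline{d}_2)$ for the vertices $c$, edges $(c_1,c_2)$ and labels $(d_1,d_2)$ of $\Gamma_C$. *)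

theory Defs
  imports "HOL-Combinatorics.Permutations"
begin

text \<open>A digit string (d_k,...,d_0)_b is given by k and a function d :: nat => nat
  (only the values d j for j \<le> k matter).\<close>

definition digval :: "nat \<Rightarrow> nat \<Rightarrow> (nat \<Rightarrow> nat) \<Rightarrow> nat" where
  "digval b k d = (\<Sum>j = 0..k. d j * b ^ j)"

definition is_permutiple_sigma :: "nat \<Rightarrow> nat \<Rightarrow> nat \<Rightarrow> (nat \<Rightarrow> nat) \<Rightarrow> (nat \<Rightarrow> nat) \<Rightarrow> bool" where
  "is_permutiple_sigma n b k d \<sigma> \<longleftrightarrow>
     (\<forall>j\<le>k. d j < b) \<and> \<sigma> permutes {0..k} \<and>
     digval b k d = n * digval b k (d \<circ> \<sigma>)"

definition perm_graph :: "nat \<Rightarrow> (nat \<Rightarrow> nat) \<Rightarrow> (nat \<Rightarrow> nat) \<Rightarrow> (nat \<times> nat) set" where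
  "perm_graph k d \<sigma> = {(d j, d (\<sigma> j)) | j. j \<le> k}"

definition dbar :: "nat \<Rightarrow> nat \<Rightarrow> nat" where
  "dbar b x = b - 1 - x"

definition reflect_graph :: "nat \<Rightarrow> (nat \<times> nat) set \<Rightarrow> (nat \<times> nat) set" where
  "reflect_graph b G = {(dbar b d1, dbar b d2) | d1 d2. (d1, d2) \<in> G}"

definition mother_graph :: "nat \<Rightarrow> nat \<Rightarrow> (nat \<times> nat) set" where
  "mother_graph n b = {(d1, d2). d1 < b \<and> d2 < b \<and> (d1 + (b - n) * d2) mod b \<le> n - 1}"

definition cycle_edges :: "nat list \<Rightarrow> (nat \<times> nat) set" where
  "cycle_edges vs = {(vs ! i, vs ! ((i + 1) mod length vs)) | i. i < length vs}"

definition is_dcycle :: "(nat \<times> nat) set \<Rightarrow> nat list \<Rightarrow> bool" where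
  "is_dcycle E vs \<longleftrightarrow> vs \<noteq> [] \<and> distinct vs \<and> cycle_edges vs \<subseteq> E"

definition cycle_image :: "nat \<Rightarrow> nat \<Rightarrow> (nat \<times> nat) set \<Rightarrow> (nat \<times> nat \<times> (nat \<times> nat)) set" where
  "cycle_image n b C0 = {(c1, c2, (d1, d2)) | c1 c2 d1 d2.
      c1 < n \<and> c2 < n \<and> (d1, d2) \<in> C0 \<and>
      int n * int d2 - int d1 + int c1 = int b * int c2}"

definition Gamma_lab :: "nat \<Rightarrow> nat \<Rightarrow> (nat \<times> nat) set \<Rightarrow> (nat \<times> nat \<times> (nat \<times> nat)) set" where
  "Gamma_lab n b G = (\<Union>vs \<in> {vs. is_dcycle (mother_graph n b) vs \<and> cycle_edges vs \<subseteq> G}.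
                         cycle_image n b (cycle_edges vs))"

definition lab_vertices :: "(nat \<times> nat \<times> (nat \<times> nat)) set \<Rightarrow> nat set" where
  "lab_vertices L = {c1 | c1 c2 l. (c1, c2, l) \<in> L} \<union> {c2 | c1 c2 l. (c1, c2, l) \<in> L}"

definition lab_edges :: "(nat \<times> nat \<times> (nat \<times> nat)) set \<Rightarrow> (nat \<times> nat) set" where
  "lab_edges L = {(c1, c2) | c1 c2 l. (c1, c2, l) \<in> L}"

definition reflect_lab :: "nat \<Rightarrow> nat \<Rightarrow> (nat \<times> nat \<times> (nat \<times> nat)) set \<Rightarrow> (nat \<times> nat \<times> (nat \<times> nat)) set" where
  "reflect_lab n b L = {(n - 1 - c1, n - 1 - c2, (dbar b d1, dbar b d2)) | c1 c2 d1 d2. (c1, c2, (d1, d2)) \<in> L}"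

end

theory Submission imports Defs begin

definition ps :: "nat \<Rightarrow> (nat \<Rightarrow> nat) \<Rightarrow> nat \<Rightarrow> int" where
  "ps b x j = (\<Sum>i<j. int (x i) * int b ^ i)"

lemma ps_Suc: "ps b x (Suc j) = ps b x j + int (x j) * int b ^ j"
  by (simp add: ps_def)

lemma ps_nonneg: "0 \<le> ps b x j"
  by (simp add: ps_def sum_nonneg)

lemma ps_bound: assumes "\<And>i. i < j \<Longrightarrow> x i < b" shows "ps b x j < int b ^ j"
  using assms
proof (induction j)
  case 0 then show ?case by (simp add: ps_def)
next
  case (Suc j)
  have "x j < b" using Suc by simp
  then have "int (x j) \<le> int b - 1" by simp
  then have "int (x j) * int b ^ j \<le> (int b - 1) * int b ^ j" by (simp add: mult_right_mono)
  moreover have "ps b x j < int b ^ j" using Suc by simp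
  ultimately have "ps b x (Suc j) < int b ^ j + (int b - 1) * int b ^ j" by (simp add: ps_Suc)
  also have "\<dots> = int b ^ Suc j" by (simp add: algebra_simps)
  finally show ?case .
qed

lemma ps_dvd: "int b ^ j dvd (ps b x (j + t) - ps b x j)"
proof (induction t)
  case 0 then show ?case by simp
next
  case (Suc t)
  have "ps b x (j + Suc t) - ps b x j = (ps b x (j + t) - ps b x j) + int (x (j+t)) * int b ^ (j+t)"
    by (simp add: ps_Suc)
  moreover have "int b ^ j dvd int (x (j+t)) * int b ^ (j+t)" by (simp add: power_add)
  ultimately show ?case using Suc by (metis dvd_add)
qed

lemma digval_ps: "int (digval b k x) = ps b x (Suc k)"
  by (simp add: digval_def ps_def atLeast0AtMost lessThan_Suc_atMost)

lemma carry_exists: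
  assumes "1 \<le> n" "n < b" "ps b x (Suc k) = int n * ps b y (Suc k)"
    "\<And>i. i \<le> k \<Longrightarrow> x i < b" "\<And>i. i \<le> k \<Longrightarrow> y i < b" "j \<le> Suc k"
  shows "\<exists>c. int n * ps b y j - ps b x j = c * int b ^ j \<and> 0 \<le> c \<and> c < int n"
proof -
  obtain t where t: "Suc k = j + t" using assms(6) le_Suc_ex by blast
  have d1: "int b ^ j dvd (ps b x (Suc k) - ps b x j)" using ps_dvd t by metis
  have d2: "int b ^ j dvd (ps b y (Suc k) - ps b y j)" using ps_dvd t by metis
  have "int n * ps b y j - ps b x j = (ps b x (Suc k) - ps b x j) - int n * (ps b y (Suc k) - ps b y j)"
    using assms(3) by (simp add: algebra_simps)
  moreover have "int b ^ j dvd \<dots>" using d1 d2 by simp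
  ultimately obtain c where c: "int n * ps b y j - ps b x j = c * int b ^ j"
    by (metis dvd_def mult.commute)
  have B: "0 < int b ^ j" using assms by simp
  have px: "ps b x j < int b ^ j" by (rule ps_bound) (use assms in auto)
  have py: "ps b y j \<le> int b ^ j - 1" using ps_bound[of j y b] assms by fastforce
  have "0 \<le> int n * ps b y j" using ps_nonneg[of b y j] by simp
  then have "c * int b ^ j > (-1) * int b ^ j" using c px by linarith
  then have "c > -1" using B by (meson less_le mult_right_less_imp_less)
  moreover have "c * int b ^ j < int n * int b ^ j"
  proof -
    have "int n * ps b y j \<le> int n * (int b ^ j - 1)" using py by (simp add: mult_left_mono)
    then show ?thesis using c ps_nonneg[of b x j] assms(1) by (simp add: algebra_simps)
  qed
  then have "c < int n" using B by (meson less_le mult_right_less_imp_less)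
  ultimately show ?thesis using c by auto
qed

definition carry :: "nat \<Rightarrow> nat \<Rightarrow> (nat \<Rightarrow> nat) \<Rightarrow> (nat \<Rightarrow> nat) \<Rightarrow> nat \<Rightarrow> int" where
  "carry n b x y j = (int n * ps b y j - ps b x j) div int b ^ j"

lemma carry_props:
  assumes "1 \<le> n" "n < b" "ps b x (Suc k) = int n * ps b y (Suc k)"
    "\<And>i. i \<le> k \<Longrightarrow> x i < b" "\<And>i. i \<le> k \<Longrightarrow> y i < b" "j \<le> Suc k"
  shows "int n * ps b y j - ps b x j = carry n b x y j * int b ^ j"
    "0 \<le> carry n b x y j" "carry n b x y j < int n"
proof -
  obtain c where c: "int n * ps b y j - ps b x j = c * int b ^ j" "0 \<le> c" "c < int n"
    using carry_exists[OF assms] by blast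
  have "carry n b x y j = c" unfolding carry_def c(1) using assms(2) by simp
  then show "int n * ps b y j - ps b x j = carry n b x y j * int b ^ j"
    "0 \<le> carry n b x y j" "carry n b x y j < int n" using c by auto
qed

lemma carry_step:
  assumes "1 \<le> n" "n < b" "ps b x (Suc k) = int n * ps b y (Suc k)"
    "\<And>i. i \<le> k \<Longrightarrow> x i < b" "\<And>i. i \<le> k \<Longrightarrow> y i < b" "j \<le> k"
  shows "int n * int (y j) + carry n b x y j = int (x j) + int b * carry n b x y (Suc j)"
proof -
  have e1: "int n * ps b y j - ps b x j = carry n b x y j * int b ^ j"
    using carry_props(1)[OF assms(1-5)] assms(6) by simp
  have e2: "int n * ps b y (Suc j) - ps b x (Suc j) = carry n b x y (Suc j) * int b ^ Suc j"
    using carry_props(1)[OF assms(1-5)] assms(6) by simp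
  have "(int n * int (y j) + carry n b x y j) * int b ^ j = (int (x j) + int b * carry n b x y (Suc j)) * int b ^ j"
    using e1 e2 by (simp add: ps_Suc algebra_simps)
  then show ?thesis using assms(2) by simp
qed

lemma carry_0: "carry n b x y 0 = 0"
  by (simp add: carry_def ps_def)

lemma carry_last:
  assumes "ps b x (Suc k) = int n * ps b y (Suc k)"
  shows "carry n b x y (Suc k) = 0"
  using assms by (simp add: carry_def)

lemma ps_split: "ps b x (m + t) = ps b x m + int b ^ m * ps b (\<lambda>i. x (i + m)) t"
proof (induction t)
  case 0 then show ?case by (simp add: ps_def)
next
  case (Suc t)
  then show ?case by (simp add: ps_Suc algebra_simps power_add)
qed

lemma ps_rot:
  assumes "m \<le> N"
  shows "ps b (\<lambda>i. x ((i + m) mod N)) N = ps b (\<lambda>i. x (i + m)) (N - m) + int b ^ (N - m) * ps b x m"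
proof -
  have "ps b (\<lambda>i. x ((i + m) mod N)) N = ps b (\<lambda>i. x ((i + m) mod N)) (N - m)
      + int b ^ (N - m) * ps b (\<lambda>i. x ((i + (N - m) + m) mod N)) m"
    using ps_split[of b "\<lambda>i. x ((i + m) mod N)" "N - m" m] assms by simp
  moreover have "ps b (\<lambda>i. x ((i + m) mod N)) (N - m) = ps b (\<lambda>i. x (i + m)) (N - m)"
    unfolding ps_def by (rule sum.cong) auto
  moreover have "ps b (\<lambda>i. x ((i + (N - m) + m) mod N)) m = ps b x m"
    unfolding ps_def using assms by (intro sum.cong) auto
  ultimately show ?thesis by simp
qed

lemma ps_dbar:
  assumes "\<And>i. i < N \<Longrightarrow> x i < b"
  shows "ps b (\<lambda>i. dbar b (x i)) N = int b ^ N - 1 - ps b x N"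
  using assms
proof (induction N)
  case 0 then show ?case by (simp add: ps_def)
next
  case (Suc N)
  have "x N < b" using Suc by simp
  then have "int (dbar b (x N)) = int b - 1 - int (x N)" by (simp add: dbar_def of_nat_diff)
  then have h0: "int (dbar b (x N)) * int b ^ N = (int b - 1 - int (x N)) * int b ^ N" by simp
  have h: "int (x N) * int b ^ N + int (dbar b (x N)) * int b ^ N = int b * int b ^ N - int b ^ N"
    unfolding h0 by (simp add: algebra_simps)
  have "ps b (\<lambda>i. dbar b (x i)) N = int b ^ N - 1 - ps b x N" using Suc by simp
  then show ?case using h by (simp add: ps_Suc)
qed


lemma mod_add_lt: "(i::nat) < N \<Longrightarrow> m \<le> N \<Longrightarrow> (i + m) mod N = (if i + m < N then i + m else i + m - N)"
proof (cases "i + m < N")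
  case True then show ?thesis by simp
next
  case False
  assume a: "i < N" "m \<le> N"
  then have "(i + m) mod N = (i + m - N) mod N" using False by (simp add: le_mod_geq)
  also have "\<dots> = i + m - N" using a False by simp
  finally show ?thesis using False by simp
qed

lemma rho_permutes:
  assumes "m \<le> Suc k"
  shows "(\<lambda>i. if i \<le> k then (i + m) mod Suc k else i) permutes {0..k}"
proof (rule bij_imp_permutes)
  let ?r = "\<lambda>i. if i \<le> k then (i + m) mod Suc k else i"
  have inj: "inj_on ?r {0..k}"
  proof (rule inj_onI)
    fix i j assume ij: "i \<in> {0..k}" "j \<in> {0..k}" "?r i = ?r j"
    then have "(i + m) mod Suc k = (j + m) mod Suc k" by simp
    then show "i = j" using ij mod_add_lt[of i "Suc k" m] mod_add_lt[of j "Suc k" m] assms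
      by (auto split: if_splits)
  qed
  have sub: "?r ` {0..k} \<subseteq> {0..k}" by (auto simp: less_Suc_eq_le)
  have "?r ` {0..k} = {0..k}" using endo_inj_surj[OF _ sub inj] by simp
  then show "bij_betw ?r {0..k} {0..k}" using inj by (simp add: bij_betw_def)
  show "\<And>x. x \<notin> {0..k} \<Longrightarrow> ?r x = x" by simp
qed

lemma rotate_reflect:
  assumes n1: "1 < n" and nb: "n < b" and P: "is_permutiple_sigma n b k d \<sigma>"
    and m: "m \<le> Suc k"
    and hm: "int n * ps b (d \<circ> \<sigma>) m - ps b d m = (int n - 1) * int b ^ m"
  shows "\<exists>k' d' \<sigma>'. is_permutiple_sigma n b k' d' \<sigma>' \<and>
             perm_graph k' d' \<sigma>' = reflect_graph b (perm_graph k d \<sigma>)"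
proof -
  let ?N = "Suc k"
  define \<rho> where "\<rho> = (\<lambda>i. if i \<le> k then (i + m) mod Suc k else i)"
  have rp: "\<rho> permutes {0..k}" unfolding \<rho>_def by (rule rho_permutes[OF m])
  have dl: "\<And>i. i \<le> k \<Longrightarrow> d i < b" and sp: "\<sigma> permutes {0..k}"
    and dv: "digval b k d = n * digval b k (d \<circ> \<sigma>)"
    using P unfolding is_permutiple_sigma_def by auto
  have sk: "\<And>i. i \<le> k \<Longrightarrow> \<sigma> i \<le> k" using permutes_in_image[OF sp] by auto
  have rk: "\<And>i. i \<le> k \<Longrightarrow> \<rho> i \<le> k" using permutes_in_image[OF rp] by auto
  define \<sigma>' where "\<sigma>' = inv \<rho> \<circ> \<sigma> \<circ> \<rho>"
  define d' where "d' = (\<lambda>i. dbar b (d (\<rho> i)))"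
  have sp': "\<sigma>' permutes {0..k}" unfolding \<sigma>'_def
    by (intro permutes_compose permutes_inv rp sp)
  have rs: "\<rho> (\<sigma>' i) = \<sigma> (\<rho> i)" for i
    unfolding \<sigma>'_def using permutes_inverses(1)[OF rp] by simp
  have d'l: "d' i < b" for i unfolding d'_def dbar_def using nb by simp
  define A where "A = (\<lambda>i. d ((i + m) mod ?N))"
  define B where "B = (\<lambda>i. (d \<circ> \<sigma>) ((i + m) mod ?N))"
  have rho_eq: "\<And>i. i < ?N \<Longrightarrow> \<rho> i = (i + m) mod ?N" by (simp add: \<rho>_def)
  have Al: "A i < b" if "i < ?N" for i unfolding A_def using dl that by simp
  have Bl: "B i < b" if "i < ?N" for i unfolding B_def using dl sk that by simp
  have e1: "ps b d' ?N = ps b (\<lambda>i. dbar b (A i)) ?N"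
    unfolding ps_def d'_def A_def using rho_eq by (intro sum.cong) auto
  have e2: "ps b (d' \<circ> \<sigma>') ?N = ps b (\<lambda>i. dbar b (B i)) ?N"
    unfolding ps_def d'_def B_def using rho_eq rs by (intro sum.cong) auto
  have e1': "ps b d' ?N = int b ^ ?N - 1 - ps b A ?N" using e1 ps_dbar[of ?N A b] Al by simp
  have e2': "ps b (d' \<circ> \<sigma>') ?N = int b ^ ?N - 1 - ps b B ?N" using e2 ps_dbar[of ?N B b] Bl by simp
  define Plo where "Plo = ps b d m"
  define Qlo where "Qlo = ps b (d \<circ> \<sigma>) m"
  define Phi where "Phi = ps b (\<lambda>i. d (i + m)) (?N - m)"
  define Qhi where "Qhi = ps b (\<lambda>i. (d \<circ> \<sigma>) (i + m)) (?N - m)"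
  define X where "X = int b ^ m"
  define Y where "Y = int b ^ (?N - m)"
  have XY: "int b ^ ?N = X * Y" unfolding X_def Y_def using m by (simp flip: power_add)
  have X0: "X > 0" unfolding X_def using nb by simp
  have rA: "ps b A ?N = Phi + Y * Plo" unfolding A_def Phi_def Y_def Plo_def by (rule ps_rot[OF m])
  have rB: "ps b B ?N = Qhi + Y * Qlo" unfolding B_def Qhi_def Y_def Qlo_def by (rule ps_rot[OF m])
  have fP: "ps b d ?N = Plo + X * Phi" unfolding Plo_def X_def Phi_def
    using ps_split[of b d m "?N - m"] m by simp
  have fQ: "ps b (d \<circ> \<sigma>) ?N = Qlo + X * Qhi" unfolding Qlo_def X_def Qhi_def
    using ps_split[of b "d \<circ> \<sigma>" m "?N - m"] m by simp
  have eq: "ps b d ?N = int n * ps b (d \<circ> \<sigma>) ?N"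
    using dv by (metis digval_ps of_nat_mult)
  have hm': "int n * Qlo - Plo = (int n - 1) * X" using hm unfolding Qlo_def Plo_def X_def .
  have "X * (Phi - int n * Qhi - (int n - 1)) = 0"
    using eq fP fQ hm' by (simp add: algebra_simps)
  then have hi: "Phi - int n * Qhi = int n - 1" using X0 by simp
  have goal: "ps b d' ?N = int n * ps b (d' \<circ> \<sigma>') ?N"
  proof -
    have "ps b d' ?N - int n * ps b (d' \<circ> \<sigma>') ?N
        = (int n * Qhi - Phi + (int n - 1)) + Y * (int n * Qlo - Plo) - (int n - 1) * (X * Y)"
      unfolding e1' e2' rA rB XY by (simp add: algebra_simps)
    also have "\<dots> = Y * ((int n - 1) * X) - (int n - 1) * (X * Y)"
      unfolding hm' using hi by simp
    also have "\<dots> = 0" by (simp add: algebra_simps)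
    finally show ?thesis by simp
  qed
  have perm': "is_permutiple_sigma n b k d' \<sigma>'"
    unfolding is_permutiple_sigma_def
  proof (intro conjI allI impI sp')
    show "\<And>j. j \<le> k \<Longrightarrow> d' j < b" using d'l by simp
    have "int (digval b k d') = int (n * digval b k (d' \<circ> \<sigma>'))"
      using goal by (simp add: digval_ps)
    then show "digval b k d' = n * digval b k (d' \<circ> \<sigma>')" by (simp only: of_nat_eq_iff)
  qed
  have graph: "perm_graph k d' \<sigma>' = reflect_graph b (perm_graph k d \<sigma>)"
  proof
    show "perm_graph k d' \<sigma>' \<subseteq> reflect_graph b (perm_graph k d \<sigma>)"
    proof
      fix e assume "e \<in> perm_graph k d' \<sigma>'"
      then obtain i where i: "i \<le> k" "e = (d' i, d' (\<sigma>' i))" by (auto simp: perm_graph_def)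
      then have "e = (dbar b (d (\<rho> i)), dbar b (d (\<sigma> (\<rho> i))))" by (simp add: d'_def rs)
      moreover have "(d (\<rho> i), d (\<sigma> (\<rho> i))) \<in> perm_graph k d \<sigma>"
        using rk[OF i(1)] by (auto simp: perm_graph_def)
      ultimately show "e \<in> reflect_graph b (perm_graph k d \<sigma>)"
        unfolding reflect_graph_def by blast
    qed
    show "reflect_graph b (perm_graph k d \<sigma>) \<subseteq> perm_graph k d' \<sigma>'"
    proof
      fix e assume "e \<in> reflect_graph b (perm_graph k d \<sigma>)"
      then obtain j where j: "j \<le> k" "e = (dbar b (d j), dbar b (d (\<sigma> j)))"
        by (auto simp: perm_graph_def reflect_graph_def)
      define i where "i = inv \<rho> j"
      have ik: "i \<le> k" unfolding i_def using permutes_in_image[OF permutes_inv[OF rp]] j by auto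
      have ri: "\<rho> i = j" unfolding i_def using permutes_inverses(1)[OF rp] by simp
      have "e = (d' i, d' (\<sigma>' i))" using j ri by (simp add: d'_def rs)
      then show "e \<in> perm_graph k d' \<sigma>'" using ik by (auto simp: perm_graph_def)
    qed
  qed
  show ?thesis using perm' graph by blast
qed

lemma path_cycle:
  assumes "(y, x) \<in> E\<^sup>*" "(x, y) \<in> E"
  shows "\<exists>vs. vs \<noteq> [] \<and> distinct vs \<and> cycle_edges vs \<subseteq> E \<and> (x, y) \<in> cycle_edges vs"
proof -
  obtain m0 where "(y, x) \<in> E ^^ m0" using assms(1) rtrancl_power by blast
  define m where "m = (LEAST m. (y, x) \<in> E ^^ m)"
  have ym: "(y, x) \<in> E ^^ m" unfolding m_def by (rule LeastI) fact
  have minm: "\<And>m'. (y, x) \<in> E ^^ m' \<Longrightarrow> m \<le> m'" unfolding m_def by (rule Least_le)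
  obtain f where f0: "f 0 = y" and fm: "f m = x" and fE: "\<And>i. i < m \<Longrightarrow> (f i, f (Suc i)) \<in> E"
    using ym relpow_fun_conv by metis
  have neq: "f a \<noteq> f c" if ac: "a < c" "c \<le> m" for a c
  proof
    assume eq: "f a = f c"
    define g where "g t = (if t \<le> a then f t else f (t + (c - a)))" for t
    have "(y, x) \<in> E ^^ (m - (c - a))"
      unfolding relpow_fun_conv
    proof (intro exI conjI allI impI)
      show "g 0 = y" using f0 by (simp add: g_def)
      show "g (m - (c - a)) = x"
      proof (cases "m - (c - a) \<le> a")
        case True then have "c = m" using ac by simp
        then show ?thesis using fm eq True ac by (simp add: g_def)
      next
        case False then show ?thesis using fm ac by (simp add: g_def)
      qed
      fix i assume i: "i < m - (c - a)"
      show "(g i, g (Suc i)) \<in> E"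
      proof (cases "i < a")
        case True then show ?thesis using fE[of i] ac by (simp add: g_def)
      next
        case False
        show ?thesis
        proof (cases "i = a")
          case True
          then show ?thesis using fE[of c] ac i eq by (simp add: g_def)
        next
          case False
          with \<open>\<not> i < a\<close> have "a < i" by simp
          then show ?thesis using fE[of "i + (c - a)"] ac i by (simp add: g_def)
        qed
      qed
    qed
    then have "m \<le> m - (c - a)" by (rule minm)
    then show False using ac by simp
  qed
  have injf: "inj_on f {0..m}"
  proof (rule inj_onI)
    fix a c assume "a \<in> {0..m}" "c \<in> {0..m}" "f a = f c"
    then show "a = c" using neq[of a c] neq[of c a] by (cases a c rule: linorder_cases) auto
  qed
  define vs where "vs = x # map f [0..<m]"
  have len: "length vs = Suc m" by (simp add: vs_def)
  have dist: "distinct vs"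
  proof -
    have "distinct (map f [0..<m])"
    proof -
      have "inj_on f {0..<m}" using injf by (rule inj_on_subset) auto
      then show ?thesis by (simp add: distinct_map)
    qed
    moreover have "x \<notin> set (map f [0..<m])" using neq fm by (auto simp del: neq) (metis order_refl)
    ultimately show ?thesis by (simp add: vs_def)
  qed
  have ce: "cycle_edges vs \<subseteq> E"
  proof
    fix e assume "e \<in> cycle_edges vs"
    then obtain i where i: "i < Suc m" "e = (vs ! i, vs ! ((i + 1) mod Suc m))"
      by (auto simp: cycle_edges_def len)
    show "e \<in> E"
    proof (cases "i = 0")
      case True
      show ?thesis
      proof (cases "m = 0")
        case True
        then have "x = y" using f0 fm by simp
        then show ?thesis using assms(2) i \<open>i = 0\<close> True by (simp add: vs_def)
      next
        case False
        then show ?thesis using assms(2) i \<open>i = 0\<close> f0 by (simp add: vs_def)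
      qed
    next
      case False
      then obtain i' where i': "i = Suc i'" by (cases i) auto
      show ?thesis
      proof (cases "i = m")
        case True
        then have mi: "m = Suc i'" using i' by simp
        have "vs ! i = f i'" "vs ! ((i + 1) mod Suc m) = x" using mi i' True fm by (simp_all add: vs_def nth_append)
        then show ?thesis using fE[of i'] i mi fm by simp
      next
        case False
        then have "Suc i < Suc m" using i by simp
        then show ?thesis using fE[of i'] i i' False by (simp add: vs_def nth_Cons split: nat.split)
      qed
    qed
  qed
  have xy: "(x, y) \<in> cycle_edges vs"
  proof -
    have "(vs ! 0, vs ! ((0 + 1) mod Suc m)) = (x, y)"
    proof (cases "m = 0")
      case True then show ?thesis using f0 fm by (simp add: vs_def)
    next
      case False then show ?thesis using f0 by (simp add: vs_def)
    qed
    then show ?thesis unfolding cycle_edges_def len by force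
  qed
  have "vs \<noteq> []" by (simp add: vs_def)
  then show ?thesis using dist ce xy by blast
qed

lemma orbit_path:
  assumes sp: "\<sigma> permutes {0..k}" and j: "j \<le> k"
  shows "(d (\<sigma> j), d j) \<in> (perm_graph k d \<sigma>)\<^sup>*"
proof -
  have "permutation \<sigma>" using sp by (auto simp: permutation_permutes)
  then obtain r where r: "r > 0" "(\<sigma> ^^ r) j = j" by (rule permutation_self)
  have step: "(d (\<sigma> j), d ((\<sigma> ^^ Suc t) j)) \<in> (perm_graph k d \<sigma>)\<^sup>*" for t
  proof (induction t)
    case 0 then show ?case by simp
  next
    case (Suc t)
    have "(\<sigma> ^^ Suc t) j \<in> {0..k}" using permutes_in_funpow_image[OF sp, of j "Suc t"] j by simp
    then have "(d ((\<sigma> ^^ Suc t) j), d (\<sigma> ((\<sigma> ^^ Suc t) j))) \<in> perm_graph k d \<sigma>"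
      by (auto simp: perm_graph_def)
    moreover have "(\<sigma> ^^ Suc (Suc t)) j = \<sigma> ((\<sigma> ^^ Suc t) j)" by simp
    ultimately show ?case using Suc by (metis rtrancl.rtrancl_into_rtrancl)
  qed
  from step[of "r - 1"] r show ?thesis by simp
qed


lemma perm_facts:
  assumes "is_permutiple_sigma n b k d \<sigma>"
  shows "ps b d (Suc k) = int n * ps b (d \<circ> \<sigma>) (Suc k)"
    "\<And>i. i \<le> k \<Longrightarrow> d i < b" "\<And>i. i \<le> k \<Longrightarrow> (d \<circ> \<sigma>) i < b"
    "\<sigma> permutes {0..k}"
proof -
  have dl: "\<And>i. i \<le> k \<Longrightarrow> d i < b" and sp: "\<sigma> permutes {0..k}"
    and dv: "digval b k d = n * digval b k (d \<circ> \<sigma>)"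
    using assms unfolding is_permutiple_sigma_def by auto
  show "ps b d (Suc k) = int n * ps b (d \<circ> \<sigma>) (Suc k)"
    using dv by (metis digval_ps of_nat_mult)
  show "\<And>i. i \<le> k \<Longrightarrow> d i < b" by (rule dl)
  show "\<And>i. i \<le> k \<Longrightarrow> (d \<circ> \<sigma>) i < b" using dl permutes_in_image[OF sp] by simp
  show "\<sigma> permutes {0..k}" by (rule sp)
qed

lemma graph_in_mother:
  assumes n1: "1 < n" and nb: "n < b" and P: "is_permutiple_sigma n b k d \<sigma>"
  shows "perm_graph k d \<sigma> \<subseteq> mother_graph n b"
proof
  fix e assume "e \<in> perm_graph k d \<sigma>"
  then obtain j where j: "j \<le> k" "e = (d j, d (\<sigma> j))" by (auto simp: perm_graph_def)
  note F = perm_facts[OF P]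
  have n1': "1 \<le> n" using n1 by simp
  let ?c = "carry n b d (d \<circ> \<sigma>) j" and ?c' = "carry n b d (d \<circ> \<sigma>) (Suc j)"
  have st0: "int n * int ((d \<circ> \<sigma>) j) + ?c = int (d j) + int b * ?c'"
    by (rule carry_step[OF n1' nb F(1)]) (use F j in auto)
  have st: "int n * int (d (\<sigma> j)) + ?c = int (d j) + int b * ?c'"
    using st0 by (metis o_apply)
  have cb: "0 \<le> ?c" "?c < int n"
    by (rule carry_props(2)[OF n1' nb F(1)], use F j in auto) (rule carry_props(3)[OF n1' nb F(1)], use F j in auto)
  define v where "v = d j + (b - n) * d (\<sigma> j)"
  have "int v = int (d j) + (int b - int n) * int (d (\<sigma> j))" using nb by (simp add: v_def of_nat_diff)
  also have "\<dots> = ?c + int b * (int (d (\<sigma> j)) - ?c')" using st by (simp add: algebra_simps)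
  finally have iv: "int v = ?c + int b * (int (d (\<sigma> j)) - ?c')" .
  have "int (v mod b) = int v mod int b" by (simp add: of_nat_mod)
  also have "\<dots> = ?c mod int b" unfolding iv by simp
  also have "\<dots> = ?c" using cb nb by simp
  finally have "int (v mod b) < int n" using cb by simp
  then have "v mod b \<le> n - 1" by simp
  moreover have "d j < b" "d (\<sigma> j) < b" using F(2)[OF j(1)] F(3)[OF j(1)] by auto
  ultimately show "e \<in> mother_graph n b" using j by (simp add: mother_graph_def v_def)
qed

lemma refl_vertex:
  assumes "\<And>c1 c2 l. (c1, c2, l) \<in> L \<Longrightarrow> c1 < n \<and> c2 < n"
  shows "0 \<in> lab_vertices (reflect_lab n b L) \<longleftrightarrow> n - 1 \<in> lab_vertices L"
proof
  assume "0 \<in> lab_vertices (reflect_lab n b L)"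
  then obtain c1 c2 d1 d2 where m: "(c1, c2, (d1, d2)) \<in> L" "n - 1 - c1 = 0 \<or> n - 1 - c2 = 0"
    by (fastforce simp: lab_vertices_def reflect_lab_def)
  then have "c1 = n - 1 \<or> c2 = n - 1" using assms[OF m(1)] by auto
  then show "n - 1 \<in> lab_vertices L" using m(1) unfolding lab_vertices_def by blast
next
  assume "n - 1 \<in> lab_vertices L"
  then obtain c1 c2 d1 d2 where m: "(c1, c2, (d1, d2)) \<in> L" "c1 = n - 1 \<or> c2 = n - 1"
    by (fastforce simp: lab_vertices_def)
  then have "n - 1 - c1 = 0 \<or> n - 1 - c2 = 0" by auto
  moreover have "(n - 1 - c1, n - 1 - c2, (dbar b d1, dbar b d2)) \<in> reflect_lab n b L"
    using m(1) unfolding reflect_lab_def by blast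
  ultimately show "0 \<in> lab_vertices (reflect_lab n b L)" unfolding lab_vertices_def by force
qed

lemma gamma_bound: "(c1, c2, l) \<in> Gamma_lab n b G \<Longrightarrow> c1 < n \<and> c2 < n"
  unfolding Gamma_lab_def cycle_image_def by blast


lemma dir13:
  assumes n1: "1 < n" and nb: "n < b" and P: "is_permutiple_sigma n b k d \<sigma>"
    and Q: "is_permutiple_sigma n b k' d' \<sigma>'"
    and G: "perm_graph k' d' \<sigma>' = reflect_graph b (perm_graph k d \<sigma>)"
  shows "n - 1 \<in> lab_vertices (Gamma_lab n b (perm_graph k d \<sigma>))"
proof -
  have n1': "1 \<le> n" using n1 by simp
  note F = perm_facts[OF P]
  note F' = perm_facts[OF Q]
  let ?c = "carry n b d' (d' \<circ> \<sigma>') 1"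
  have st0: "int n * int ((d' \<circ> \<sigma>') 0) + carry n b d' (d' \<circ> \<sigma>') 0 = int (d' 0) + int b * carry n b d' (d' \<circ> \<sigma>') (Suc 0)"
    by (rule carry_step[OF n1' nb F'(1)]) (use F' in auto)
  have st: "int n * int (d' (\<sigma>' 0)) = int (d' 0) + int b * ?c"
    using st0 by (simp add: carry_0)
  have cb: "0 \<le> ?c" "?c < int n"
    by (rule carry_props(2)[OF n1' nb F'(1)], use F' in auto) (rule carry_props(3)[OF n1' nb F'(1)], use F' in auto)
  have "(d' 0, d' (\<sigma>' 0)) \<in> perm_graph k' d' \<sigma>'" by (auto simp: perm_graph_def)
  then obtain j where j: "j \<le> k" "d' 0 = dbar b (d j)" "d' (\<sigma>' 0) = dbar b (d (\<sigma> j))"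
    unfolding G by (auto simp: reflect_graph_def perm_graph_def)
  define x where "x = d j"
  define y where "y = d (\<sigma> j)"
  have xb: "x < b" "y < b" using F(2)[OF j(1)] F(3)[OF j(1)] by (auto simp: x_def y_def)
  have "int (d' 0) = int b - 1 - int x" "int (d' (\<sigma>' 0)) = int b - 1 - int y"
    using j xb by (simp_all add: x_def y_def dbar_def of_nat_diff)
  then have "int n * (int b - 1 - int y) = int b - 1 - int x + int b * ?c" using st by simp
  then have eqc: "int n * int y - int x + int (n - 1) = int b * int (nat (int n - 1 - ?c))"
    using cb n1 by (simp add: algebra_simps of_nat_diff)
  have xyG: "(x, y) \<in> perm_graph k d \<sigma>" using j by (auto simp: perm_graph_def x_def y_def)
  have "(y, x) \<in> (perm_graph k d \<sigma>)\<^sup>*" unfolding x_def y_def by (rule orbit_path[OF F(4) j(1)])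
  then obtain vs where vs: "vs \<noteq> []" "distinct vs" "cycle_edges vs \<subseteq> perm_graph k d \<sigma>"
    "(x, y) \<in> cycle_edges vs" using path_cycle xyG by blast
  have dc: "is_dcycle (mother_graph n b) vs"
    using vs graph_in_mother[OF n1 nb P] by (auto simp: is_dcycle_def)
  have "(n - 1, nat (int n - 1 - ?c), (x, y)) \<in> cycle_image n b (cycle_edges vs)"
    unfolding cycle_image_def using n1 cb vs(4) eqc by auto
  then have "(n - 1, nat (int n - 1 - ?c), (x, y)) \<in> Gamma_lab n b (perm_graph k d \<sigma>)"
    unfolding Gamma_lab_def using dc vs(3) by blast
  then show ?thesis unfolding lab_vertices_def by blast
qed

lemma dir31:
  assumes n1: "1 < n" and nb: "n < b" and P: "is_permutiple_sigma n b k d \<sigma>"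
    and V: "n - 1 \<in> lab_vertices (Gamma_lab n b (perm_graph k d \<sigma>))"
  shows "\<exists>k' d' \<sigma>'. is_permutiple_sigma n b k' d' \<sigma>' \<and>
             perm_graph k' d' \<sigma>' = reflect_graph b (perm_graph k d \<sigma>)"
proof -
  have n1': "1 \<le> n" using n1 by simp
  note F = perm_facts[OF P]
  obtain c1 c2 d1 d2 where m: "(c1, c2, (d1, d2)) \<in> Gamma_lab n b (perm_graph k d \<sigma>)"
    "c1 = n - 1 \<or> c2 = n - 1"
    using V by (fastforce simp: lab_vertices_def)
  then obtain vs where vs: "cycle_edges vs \<subseteq> perm_graph k d \<sigma>"
    "(c1, c2, (d1, d2)) \<in> cycle_image n b (cycle_edges vs)"
    unfolding Gamma_lab_def by blast
  then have ci: "c1 < n" "c2 < n" "(d1, d2) \<in> cycle_edges vs"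
    "int n * int d2 - int d1 + int c1 = int b * int c2"
    unfolding cycle_image_def by auto
  then obtain j where j: "j \<le> k" "d1 = d j" "d2 = d (\<sigma> j)"
    using vs(1) by (auto simp: perm_graph_def)
  let ?c = "carry n b d (d \<circ> \<sigma>)"
  have st0: "int n * int ((d \<circ> \<sigma>) j) + ?c j = int (d j) + int b * ?c (Suc j)"
    by (rule carry_step[OF n1' nb F(1)]) (use F j in auto)
  have cb: "0 \<le> ?c j" "?c j < int n"
    by (rule carry_props(2)[OF n1' nb F(1)], use F j in auto) (rule carry_props(3)[OF n1' nb F(1)], use F j in auto)
  have diff: "int b * (int c2 - ?c (Suc j)) = int c1 - ?c j"
    using st0 ci(4) j by (simp add: algebra_simps)
  have c2eq: "?c (Suc j) = int c2"
  proof (rule ccontr)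
    assume ne: "?c (Suc j) \<noteq> int c2"
    show False
    proof (cases "int c2 - ?c (Suc j) \<ge> 1")
      case True
      then have "int b * 1 \<le> int b * (int c2 - ?c (Suc j))" by (intro mult_left_mono) auto
      then show False using diff cb ci nb by simp
    next
      case False
      then have "int c2 - ?c (Suc j) \<le> -1" using ne by simp
      then have "int b * (int c2 - ?c (Suc j)) \<le> int b * (-1)" by (intro mult_left_mono) auto
      then show False using diff cb ci nb by simp
    qed
  qed
  then have c1eq: "?c j = int c1" using diff by simp
  define mm where "mm = (if c1 = n - 1 then j else Suc j)"
  have mmk: "mm \<le> Suc k" using j by (simp add: mm_def)
  have cm: "?c mm = int n - 1" using m(2) c1eq c2eq n1 by (auto simp: mm_def of_nat_diff)
  have "int n * ps b (d \<circ> \<sigma>) mm - ps b d mm = ?c mm * int b ^ mm"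
    by (rule carry_props(1)[OF n1' nb F(1)]) (use F mmk in auto)
  then have hm: "int n * ps b (d \<circ> \<sigma>) mm - ps b d mm = (int n - 1) * int b ^ mm" using cm by simp
  show ?thesis by (rule rotate_reflect[OF n1 nb P mmk hm])
qed

theorem theorem15:
  fixes n b k :: nat and d \<sigma> :: "nat \<Rightarrow> nat"
  assumes "1 < n" and "n < b"
    and "is_permutiple_sigma n b k d \<sigma>"
  shows "((\<exists>k' d' \<sigma>'. is_permutiple_sigma n b k' d' \<sigma>' \<and>
             perm_graph k' d' \<sigma>' = reflect_graph b (perm_graph k d \<sigma>))
          \<longleftrightarrow> 0 \<in> lab_vertices (reflect_lab n b (Gamma_lab n b (perm_graph k d \<sigma>))))
       \<and> (0 \<in> lab_vertices (reflect_lab n b (Gamma_lab n b (perm_graph k d \<sigma>)))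
          \<longleftrightarrow> n - 1 \<in> lab_vertices (Gamma_lab n b (perm_graph k d \<sigma>)))"
proof -
  have R: "0 \<in> lab_vertices (reflect_lab n b (Gamma_lab n b (perm_graph k d \<sigma>)))
          \<longleftrightarrow> n - 1 \<in> lab_vertices (Gamma_lab n b (perm_graph k d \<sigma>))"
    by (rule refl_vertex) (rule gamma_bound)
  have "(\<exists>k' d' \<sigma>'. is_permutiple_sigma n b k' d' \<sigma>' \<and>
             perm_graph k' d' \<sigma>' = reflect_graph b (perm_graph k d \<sigma>))
        \<longleftrightarrow> n - 1 \<in> lab_vertices (Gamma_lab n b (perm_graph k d \<sigma>))"
    using dir13[OF assms] dir31[OF assms] by blast
  then show ?thesis using R by blast
qed

end
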